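(* Let $\rho_-,\rho_+\in(0,1)$ and let $D,E$ be matrices and $|V\rangle,\langle W|$ vectors such that $\langle W|V\rangle=1$, $DE=D+E$, $(1-\rho_+)D|V\rangle=|V\rangle$ and $\langle W|\rho_-E=\langle W|$. For $N\ge1$ and $\eta\in\Sigma_N=\{0,1\}^{\{1,\dots,N\}}$ set $\omega_N(\eta)=\langle W|\prod_{x=1}^N\{\eta(x)D+[1-\eta(x)]E\}|V\rangle$ (product ordered from $x=1$ to $x=N$). Then for any $N\ge2$ and any $\eta\in\Sigma_N$ for which there is a site $x\in\{1,\dots,N-1\}$ with $\eta_x=1$ and $\eta_{x+1}=0$, the quantity $$s_N(x,\eta)=\omega_N(\eta)-\omega_N(\sigma^{x,x+1}\eta)$$ has the same sign as $\rho_--\rho_+$.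
   Context: $\sigma^{x,x+1}\eta$ denotes the configuration obtained from $\eta$ by exchanging the occupation variables $\eta_x$ and $\eta_{x+1}$. (Such matrices and vectors give the matrix-product representation $\mu_{ss,N}(\eta)=\omega_N(\eta)/\langle W|(D+E)^N|V\rangle$ of the stationary measure of the boundary driven TASEP on $\{1,\dots,N\}$ with rightward jumps.) *)

theory Defs
  imports Complex_Main
begin

text \<open>Matrices are rendered as linear operators D, E on a real vector space 'v,
 the ket |V> as a vector V, the bra <W| as a linear functional W.\<close>

definition site_op :: "('v::real_vector \<Rightarrow> 'v) \<Rightarrow> ('v \<Rightarrow> 'v) \<Rightarrow> real \<Rightarrow> 'v \<Rightarrow> 'v" where
  "site_op D E e u = e *\<^sub>R D u + (1 - e) *\<^sub>R E u"

definition omega :: "('v::real_vector \<Rightarrow> real) \<Rightarrow> ('v \<Rightarrow> 'v) \<Rightarrow> ('v \<Rightarrow> 'v) \<Rightarrow> 'v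
    \<Rightarrow> nat \<Rightarrow> (nat \<Rightarrow> real) \<Rightarrow> real" where
  "omega W D E V N \<eta> = W (foldr (\<lambda>x u. site_op D E (\<eta> x) u) [1..<N+1] V)"

definition swap_sites :: "nat \<Rightarrow> (nat \<Rightarrow> real) \<Rightarrow> (nat \<Rightarrow> real)" where
  "swap_sites x \<eta> = \<eta>(x := \<eta> (x+1), x+1 := \<eta> x)"

end

theory Submission
  imports Defs
begin

lemma linear_funpow: "linear (f::'a::real_vector\<Rightarrow>'a) \<Longrightarrow> linear (f ^^ k)"
  by (induct k) (auto simp: linear_id intro: linear_compose simp del: funpow.simps(2) simp add: funpow_Suc_right)

lemma linear_site: "linear D \<Longrightarrow> linear E \<Longrightarrow> linear (site_op D E c)"
  unfolding site_op_def
  by (rule linearI) (simp_all add: linear_add linear_scale scaleR_add_right mult.commute)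

lemma site0: "site_op D E 0 u = E u" by (simp add: site_op_def)
lemma site1: "site_op D E 1 u = D u" by (simp add: site_op_def)

lemma linear_foldr:
  assumes "linear D" "linear E"
  shows "linear (\<lambda>u. foldr (\<lambda>x u. site_op D E (\<eta> x) u) xs u)"
proof (induct xs)
  case Nil then show ?case by (simp add: linear_ident)
next
  case (Cons y ys)
  have "linear (site_op D E (\<eta> y) \<circ> (\<lambda>u. foldr (\<lambda>x u. site_op D E (\<eta> x) u) ys u))"
    by (rule linear_compose[OF Cons linear_site[OF assms]])
  then show ?case by (simp add: o_def)
qed

locale tasep =
  fixes D E :: "'v::real_vector \<Rightarrow> 'v" and V :: 'v and W :: "'v \<Rightarrow> real" and a b :: real
  assumes lD: "linear D" and lE: "linear E" and lW: "linear W"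
    and WV: "W V = 1"
    and DE: "\<And>u. D (E u) = D u + E u"
    and DV: "D V - V = b *\<^sub>R V"
    and WE: "\<And>u. W (E u - u) = a * W u"
    and apos: "a > 0" and bpos: "b > 0"
begin

definition d where "d u = D u - u"
definition e where "e u = E u - u"
definition P where "P u = D (E u) - E (D u)"

lemma ld: "linear d" unfolding d_def[abs_def]
  by (rule linearI) (simp_all add: linear_add[OF lD] linear_scale[OF lD] scaleR_diff_right)
lemma le: "linear e" unfolding e_def[abs_def]
  by (rule linearI) (simp_all add: linear_add[OF lE] linear_scale[OF lE] scaleR_diff_right)

lemma de: "d (e u) = u"
  unfolding d_def e_def using DE[of u] by (simp add: linear_diff[OF lD])

lemma P_alt: "P u = u - e (d u)"
  unfolding P_def d_def e_def using DE[of u]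
  by (simp add: linear_diff[OF lD] linear_diff[OF lE] algebra_simps)

lemma lP: "linear P"
  unfolding P_alt[abs_def]
  by (rule linearI) (simp_all add: linear_add[OF ld] linear_scale[OF ld] linear_add[OF le] linear_scale[OF le] scaleR_diff_right)

lemma dP: "d (P u) = 0"
  by (simp add: P_alt linear_diff[OF ld] de)

lemma Pe: "P (e u) = 0"
  by (simp add: P_alt de)

lemma dV: "d V = b *\<^sub>R V" using DV by (simp add: d_def)
lemma We: "W (e u) = a * W u" using WE by (simp add: e_def)

lemma E_eq: "E u = u + e u" by (simp add: e_def)
lemma D_eq: "D u = u + d u" by (simp add: d_def)

lemma dk_V: "(d ^^ k) V = b ^ k *\<^sub>R V"
  by (induct k) (simp_all add: dV linear_scale[OF ld])

lemma right:
  assumes "\<forall>y\<in>set ys. \<eta> y \<in> {0,1}"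
  shows "\<exists>l>0. W (P ((d ^^ k) (foldr (\<lambda>x u. site_op D E (\<eta> x) u) ys V))) = l * (1 - a*b)"
  using assms
proof (induct ys arbitrary: k)
  case Nil
  have "W (P V) = 1 - a * b"
    by (simp add: P_alt linear_diff[OF lW] WV We dV linear_scale[OF lW])
  then show ?case using bpos
    by (intro exI[of _ "b^k"]) (simp add: dk_V linear_scale[OF lP] linear_scale[OF lW])
next
  case (Cons y ys)
  let ?z = "foldr (\<lambda>x u. site_op D E (\<eta> x) u) ys V"
  let ?F = "\<lambda>k. W (P ((d ^^ k) ?z))"
  have IH: "\<And>k. \<exists>l>0. ?F k = l * (1 - a*b)" using Cons by auto
  have ldk: "\<And>k. linear (d ^^ k)" by (rule linear_funpow[OF ld])
  have WPadd: "\<And>u v. W (P (u + v)) = W (P u) + W (P v)"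
    by (simp add: linear_add[OF lP] linear_add[OF lW])
  have Dcase: "W (P ((d ^^ k) (D ?z))) = ?F k + ?F (Suc k)"
    by (simp add: D_eq linear_add[OF ldk] WPadd funpow_Suc_right del: funpow.simps(2))
  have Ecase: "W (P ((d ^^ k) (E ?z))) = (case k of 0 \<Rightarrow> ?F 0 | Suc j \<Rightarrow> ?F j + ?F (Suc j))"
  proof (cases k)
    case 0 then show ?thesis by (simp add: E_eq WPadd Pe linear_0[OF lW])
  next
    case (Suc j)
    have "(d ^^ k) (E ?z) = (d ^^ j) (d (?z + e ?z))" using Suc
      by (simp add: E_eq funpow_Suc_right del: funpow.simps(2))
    also have "\<dots> = (d ^^ j) ?z + (d ^^ Suc j) ?z"
      by (simp add: linear_add[OF ld] de linear_add[OF ldk] funpow_Suc_right add.commute del: funpow.simps(2))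
    finally show ?thesis using Suc by (simp add: WPadd)
  qed
  have sum: "\<exists>l>0. ?F i + ?F j = l * (1 - a*b)" for i j
  proof -
    obtain l1 where "l1 > 0" "?F i = l1 * (1 - a*b)" using IH by blast
    moreover obtain l2 where "l2 > 0" "?F j = l2 * (1 - a*b)" using IH by blast
    ultimately show ?thesis by (intro exI[of _ "l1+l2"]) (simp add: algebra_simps)
  qed
  have "\<eta> y = 0 \<or> \<eta> y = 1" using Cons.prems by auto
  then show ?case
  proof
    assume "\<eta> y = 0"
    then have fe: "foldr (\<lambda>x u. site_op D E (\<eta> x) u) (y#ys) V = E ?z" by (simp add: site0)
    show ?thesis
    proof (cases k)
      case 0 then show ?thesis using Ecase IH[of 0] fe by simp
    next
      case (Suc j) then show ?thesis using Ecase sum[of j "Suc j"] fe by simp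
    qed
  next
    assume "\<eta> y = 1"
    then have "foldr (\<lambda>x u. site_op D E (\<eta> x) u) (y#ys) V = D ?z" by (simp add: site1)
    then show ?thesis using Dcase sum[of k "Suc k"] by simp
  qed
qed

lemma left:
  assumes "\<forall>y\<in>set xs. \<eta> y \<in> {0,1}"
  shows "\<exists>m>0. W (foldr (\<lambda>x u. site_op D E (\<eta> x) u) xs ((e ^^ k) (P w))) = m * W (P w)"
  using assms
proof (induct xs arbitrary: k rule: rev_induct)
  case Nil
  have "W ((e ^^ k) u) = a ^ k * W u" for u
    by (induct k arbitrary: u) (simp_all add: We funpow_Suc_right del: funpow.simps(2))
  then show ?case using apos by (intro exI[of _ "a^k"]) simp
next
  case (snoc y ys)
  let ?L = "\<lambda>u. foldr (\<lambda>x u. site_op D E (\<eta> x) u) ys u"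
  let ?G = "\<lambda>k. W (?L ((e ^^ k) (P w)))"
  have IH: "\<And>k. \<exists>m>0. ?G k = m * W (P w)" using snoc by auto
  have lL: "linear ?L" by (rule linear_foldr[OF lD lE])
  have ldk: "\<And>k. linear (e ^^ k)" by (rule linear_funpow[OF le])
  have WLadd: "\<And>u v. W (?L (u + v)) = W (?L u) + W (?L v)"
    by (simp add: linear_add[OF lL] linear_add[OF lW])
  have Ecase: "W (?L (E ((e ^^ k) (P w)))) = ?G k + ?G (Suc k)"
    by (simp add: E_eq WLadd)
  have Dcase: "W (?L (D ((e ^^ k) (P w)))) = (case k of 0 \<Rightarrow> ?G 0 | Suc j \<Rightarrow> ?G (Suc j) + ?G j)"
  proof (cases k)
    case 0 then show ?thesis by (simp add: D_eq dP)
  next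
    case (Suc j)
    then show ?thesis by (simp add: D_eq WLadd de)
  qed
  have sum: "\<exists>m>0. ?G i + ?G j = m * W (P w)" for i j
  proof -
    obtain l1 where "l1 > 0" "?G i = l1 * W (P w)" using IH by blast
    moreover obtain l2 where "l2 > 0" "?G j = l2 * W (P w)" using IH by blast
    ultimately show ?thesis by (intro exI[of _ "l1+l2"]) (simp add: algebra_simps)
  qed
  have "\<eta> y = 0 \<or> \<eta> y = 1" using snoc.prems by auto
  then show ?case
  proof
    assume "\<eta> y = 0"
    then show ?thesis using Ecase sum[of k "Suc k"] by (simp add: site0)
  next
    assume "\<eta> y = 1"
    show ?thesis
    proof (cases k)
      case 0 then show ?thesis using Dcase IH[of 0] \<open>\<eta> y = 1\<close> by (simp add: site1)
    next
      case (Suc j) then show ?thesis using Dcase sum[of "Suc j" j] \<open>\<eta> y = 1\<close> by (simp add: site1)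
    qed
  qed
qed

end

theorem lemma5p1:
  fixes D E :: "'v::real_vector \<Rightarrow> 'v" and V :: 'v and W :: "'v \<Rightarrow> real"
    and rho_minus rho_plus :: real and N x :: nat and \<eta> :: "nat \<Rightarrow> real"
  assumes "0 < rho_minus" "rho_minus < 1" "0 < rho_plus" "rho_plus < 1"
    and "linear D" "linear E" "linear W"
    and "W V = 1"
    and "\<And>u. D (E u) = D u + E u"
    and "(1 - rho_plus) *\<^sub>R D V = V"
    and "\<And>u. rho_minus * W (E u) = W u"
    and "N \<ge> 2"
    and "\<forall>y\<in>{1..N}. \<eta> y \<in> {0, 1}"
    and "1 \<le> x" "x \<le> N - 1" "\<eta> x = 1" "\<eta> (x+1) = 0"
  shows "sgn (omega W D E V N \<eta> - omega W D E V N (swap_sites x \<eta>)) = sgn (rho_minus - rho_plus)"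
proof -
  define a where "a = (1 - rho_minus) / rho_minus"
  define b where "b = rho_plus / (1 - rho_plus)"
  have DV': "D V = (1 / (1 - rho_plus)) *\<^sub>R V"
  proof -
    have "D V = (1 / (1 - rho_plus)) *\<^sub>R ((1 - rho_plus) *\<^sub>R D V)" using assms(4) by simp
    then show ?thesis using assms(10) by simp
  qed
  interpret tasep D E V W a b
  proof (rule tasep.intro)
    have "1 / (1 - rho_plus) = 1 + b" using assms(4) by (simp add: b_def field_simps)
    then show "D V - V = b *\<^sub>R V" unfolding DV' by (simp add: scaleR_add_left)
    fix u
    have "W (E u) = W u / rho_minus" using assms(1) assms(11)[of u] by (simp add: field_simps)
    then show "W (E u - u) = a * W u"
      using assms(1) by (simp add: linear_diff[OF assms(7)] a_def field_simps)
    next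
    show "a > 0" using assms(1,2) by (simp add: a_def)
  next
    show "b > 0" using assms(3,4) by (simp add: b_def)
  qed (fact assms(5,6,7,8) | rule assms(9))+
  let ?f = "\<lambda>\<eta>'. (\<lambda>x u. site_op D E (\<eta>' x) u)"
  let ?xs = "[1..<x]" and ?ys = "[x+2..<N+1]"
  let ?\<sigma> = "swap_sites x \<eta>"
  have split: "[1..<N+1] = ?xs @ x # Suc x # ?ys"
  proof -
    have "[1..<N+1] = [1..<x] @ [x..<N+1]" using assms(14,15) upt_add_eq_append[of 1 x "N+1-x"] by simp
    moreover have "[x..<N+1] = x # Suc x # [x+2..<N+1]" using assms(12,15)
      by (auto simp add: upt_conv_Cons)
    ultimately show ?thesis by simp
  qed
  have sw: "?\<sigma> y = \<eta> y" if "y \<noteq> x" "y \<noteq> Suc x" for y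
    using that by (simp add: swap_sites_def)
  have Lsw: "foldr (?f ?\<sigma>) ?xs u = foldr (?f \<eta>) ?xs u" for u
    by (rule foldr_cong) (auto simp: sw)
  have Rsw: "foldr (?f ?\<sigma>) ?ys V = foldr (?f \<eta>) ?ys V"
  proof (rule foldr_cong)
    fix uu y assume "y \<in> set ?ys"
    then have "x + 2 \<le> y" by (simp only: set_upt atLeastLessThan_iff)
    then have "y \<noteq> x" "y \<noteq> Suc x" by linarith+
    then have "?\<sigma> y = \<eta> y" by (rule sw)
    then show "site_op D E (?\<sigma> y) uu = site_op D E (\<eta> y) uu" by (rule arg_cong)
  qed (rule refl)+
  define z where "z = foldr (?f \<eta>) ?ys V"
  define L where "L = (\<lambda>u. foldr (?f \<eta>) ?xs u)"
  have lL: "linear L" unfolding L_def by (rule linear_foldr[OF assms(5,6)])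
  have sx: "?\<sigma> x = 0" "?\<sigma> (Suc x) = 1" using assms(16,17) by (simp_all add: swap_sites_def)
  have o1: "omega W D E V N \<eta> = W (L (D (E z)))"
  proof -
    have "omega W D E V N \<eta> = W (L (site_op D E (\<eta> x) (site_op D E (\<eta> (Suc x)) z)))"
      unfolding omega_def split L_def z_def by (simp only: foldr_append foldr.simps o_apply)
    then show ?thesis using assms(16,17) by (simp add: site0 site1)
  qed
  have o2: "omega W D E V N ?\<sigma> = W (L (E (D z)))"
  proof -
    have "omega W D E V N ?\<sigma> = W (foldr (?f ?\<sigma>) ?xs (site_op D E (?\<sigma> x) (site_op D E (?\<sigma> (Suc x)) (foldr (?f ?\<sigma>) ?ys V))))"
      unfolding omega_def split by (simp only: foldr_append foldr.simps o_apply)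
    then show ?thesis unfolding Lsw Rsw sx L_def z_def by (simp add: site0 site1)
  qed
  have diff: "omega W D E V N \<eta> - omega W D E V N ?\<sigma> = W (L (P z))"
    unfolding o1 o2 P_def by (simp add: linear_diff[OF lL] linear_diff[OF assms(7)])
  have xs01: "\<forall>y\<in>set ?xs. \<eta> y \<in> {0,1}" "\<forall>y\<in>set ?ys. \<eta> y \<in> {0,1}"
  proof -
    have "y \<in> {1..N}" if "y \<in> set ?xs" for y
      using that assms(15) by (simp only: set_upt atLeastLessThan_iff atLeastAtMost_iff) presburger
    moreover have "y \<in> {1..N}" if "y \<in> set ?ys" for y
      using that by (simp only: set_upt atLeastLessThan_iff atLeastAtMost_iff) presburger
    ultimately show "\<forall>y\<in>set ?xs. \<eta> y \<in> {0,1}" "\<forall>y\<in>set ?ys. \<eta> y \<in> {0,1}"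
      using assms(13) by blast+
  qed
  obtain m where m: "m > 0" "W (L (P z)) = m * W (P z)"
    using left[OF xs01(1), of 0 z] by (auto simp: L_def)
  obtain l where l: "l > 0" "W (P z) = l * (1 - a*b)"
    using right[OF xs01(2), of 0] by (auto simp: z_def)
  have ab: "1 - a*b = (rho_minus - rho_plus) / ((1 - rho_plus) * rho_minus)"
    using assms(1,4) by (simp add: a_def b_def field_simps)
  have c: "(m * l) / ((1 - rho_plus) * rho_minus) > 0" using m l assms(1,4) by simp
  have "omega W D E V N \<eta> - omega W D E V N ?\<sigma> = ((m * l) / ((1 - rho_plus) * rho_minus)) * (rho_minus - rho_plus)"
    unfolding diff m l ab by simp
  moreover obtain C where "C = (m * l) / ((1 - rho_plus) * rho_minus)" by blast
  ultimately have "omega W D E V N \<eta> - omega W D E V N ?\<sigma> = C * (rho_minus - rho_plus)" "C > 0"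
    using c by simp_all
  then show ?thesis by (simp only: sgn_mult sgn_pos mult_1)
qed

end
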